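(* Assume the Richardson limit shape $\mathcal{S}$ is uniformly curved, and let $z,r,\delta,\beta,\alpha$ and the sets $\mathcal{R}_0^n,\mathcal{B}_0^n,\mathcal{R}_1^n$ be as defined in the context. Then for all sufficiently large $n$ and all $x\in\mathcal{R}_1^n$, \[d(x,\mathcal{R}_0^n)+4(\delta n)^\beta<d(x,\mathcal{B}_0^n).\]
   Context: $\mathcal{S}$ is the limit shape of the Richardson model on $\mathbb{Z}^d$ (each unoccupied site becomes occupied at rate equal to its number of occupied neighbours): the nonrandom compact convex set with nonempty interior such that for every finite nonempty initial set and $\epsilon>0$, a.s. $(1-\epsilon)\mathcal{S}\subseteq\hat Z(s)/s\subseteq(1+\epsilon)\mathcal{S}$ for large $s$, $\hat Z=\{x:\operatorname{dist}_\infty(x,Z)\le1/2\}$. Uniformly curved: there is $\varrho<\infty$ such that each $z\in\partial\mathcal{S}$ lies on the boundary of a Euclidean ball of radius $\varrho$ containing $\mathcal{S}$. Richardson norm $|x|=\inf\{t>0:x\in t\mathcal{S}\}$, metric $d(x,y)=|x-y|$, $d(x,A)=\inf_{y\in A}d(x,y)$, $\pi x=x/|x|$. $D(x;\rho)=\{y:d(x,y)\le\rho\}$, $D(x;\rho_1,\rho_2)=D(x;\rho_2)\setminus D(x;\rho_1)$. Angular sector: $\mathcal{A}(z;\varrho)=\{y\ne0:d(\pi y,z)<\varrho\}$ for $z\in\partial\mathcal{S}$. Fix $z\in\partial\mathcal{S}$, $r>0$, $\delta\in(0,1)$, $\beta\in(1/2,1)$, $\alpha\in(1/2,1)$ with $(\beta+1)/2<\alpha$;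 for $n\ge1$, $A_1=\mathcal{A}(z;r)$, $A_2=\mathcal{A}(z;r+n^{\alpha-1})$, $\mathcal{R}_0^n=D(0;n/(1+\delta),n-n^\beta)\cap A_2\cap\mathbb{Z}^d$, $\mathcal{B}_0^n=(D(0;n/(1+\delta))\cup(D(0;n/(1+\delta),n+n^\beta)\cap A_2^c))\cap\mathbb{Z}^d$, $\mathcal{R}_1^n=D(0;n,n(1+\delta)-(n+\delta n)^\beta)\cap A_1\cap\mathbb{Z}^d$. *)

theory Defs
  imports "HOL-Analysis.Analysis"
begin

definition int_lattice :: "(real^'d) set" where
  "int_lattice = {x. \<forall>i. x $ i \<in> \<int>}"

definition rnorm :: "(real^'d) set \<Rightarrow> real^'d \<Rightarrow> real" where
  "rnorm S x = Inf {t. 0 < t \<and> x \<in> (\<lambda>v. t *\<^sub>R v) ` S}"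

definition rdist :: "(real^'d) set \<Rightarrow> real^'d \<Rightarrow> real^'d \<Rightarrow> real" where
  "rdist S x y = rnorm S (x - y)"

definition rsetdist :: "(real^'d) set \<Rightarrow> real^'d \<Rightarrow> (real^'d) set \<Rightarrow> real" where
  "rsetdist S x A = Inf (rdist S x ` A)"

definition rproj :: "(real^'d) set \<Rightarrow> real^'d \<Rightarrow> real^'d" where
  "rproj S x = (1 / rnorm S x) *\<^sub>R x"

definition rball :: "(real^'d) set \<Rightarrow> real^'d \<Rightarrow> real \<Rightarrow> (real^'d) set" where
  "rball S x \<rho> = {y. rdist S x y \<le> \<rho>}"

definition rannulus :: "(real^'d) set \<Rightarrow> real^'d \<Rightarrow> real \<Rightarrow> real \<Rightarrow> (real^'d) set" where
  "rannulus S x \<rho>1 \<rho>2 = rball S x \<rho>2 - rball S x \<rho>1"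

definition sector :: "(real^'d) set \<Rightarrow> real^'d \<Rightarrow> real \<Rightarrow> (real^'d) set" where
  "sector S z \<rho> = {y. y \<noteq> 0 \<and> rdist S (rproj S y) z < \<rho>}"

definition uniformly_curved :: "(real^'d) set \<Rightarrow> bool" where
  "uniformly_curved S \<longleftrightarrow>
     (\<exists>\<rho>::real. \<forall>w\<in>frontier S. \<exists>c. S \<subseteq> cball c \<rho> \<and> w \<in> sphere c \<rho>)"

definition R0 :: "(real^'d) set \<Rightarrow> real^'d \<Rightarrow> real \<Rightarrow> real \<Rightarrow> real \<Rightarrow> real \<Rightarrow> nat \<Rightarrow> (real^'d) set" where
  "R0 S z r \<delta> \<beta> \<alpha> n =
     rannulus S 0 (real n / (1 + \<delta>)) (real n - real n powr \<beta>)
     \<inter> sector S z (r + real n powr (\<alpha> - 1)) \<inter> int_lattice"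

definition B0 :: "(real^'d) set \<Rightarrow> real^'d \<Rightarrow> real \<Rightarrow> real \<Rightarrow> real \<Rightarrow> real \<Rightarrow> nat \<Rightarrow> (real^'d) set" where
  "B0 S z r \<delta> \<beta> \<alpha> n =
     (rball S 0 (real n / (1 + \<delta>))
      \<union> (rannulus S 0 (real n / (1 + \<delta>)) (real n + real n powr \<beta>)
         \<inter> - sector S z (r + real n powr (\<alpha> - 1))))
     \<inter> int_lattice"

definition R1 :: "(real^'d) set \<Rightarrow> real^'d \<Rightarrow> real \<Rightarrow> real \<Rightarrow> real \<Rightarrow> nat \<Rightarrow> (real^'d) set" where
  "R1 S z r \<delta> \<beta> n =
     rannulus S 0 (real n) (real n * (1 + \<delta>) - (real n + \<delta> * real n) powr \<beta>)
     \<inter> sector S z r \<inter> int_lattice"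

end

theory Submission imports Defs "HOL-Real_Asymp.Real_Asymp" begin

lemma frac_lt: fixes e a :: real assumes "0 < e" "0 \<le> a" shows "e * (a / (a + 1)) < e"
proof -
  have "a / (a + 1) < 1" using assms by simp
  then show ?thesis using mult_strict_left_mono[of "a/(a+1)" 1 e] assms by simp
qed

locale gS =
  fixes S :: "(real^'d) set" and \<epsilon> R :: real
  assumes cpt: "compact S" and cvx: "convex S" and sym: "\<forall>x\<in>S. - x \<in> S"
    and epos: "0 < \<epsilon>" and eball: "cball 0 \<epsilon> \<subseteq> S"
    and Rpos: "0 < R" and Rb: "\<forall>x\<in>S. norm x \<le> R"
begin

abbreviation g where "g \<equiv> rnorm S"

definition T where "T w = {t. 0 < t \<and> w \<in> (\<lambda>v. t *\<^sub>R v) ` S}"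

lemma g_def': "g w = Inf (T w)" unfolding rnorm_def T_def by simp

lemma mem_T: "t \<in> T w \<longleftrightarrow> 0 < t \<and> (1/t) *\<^sub>R w \<in> S"
proof
  assume "t \<in> T w"
  then obtain v where "0 < t" "v \<in> S" "w = t *\<^sub>R v" unfolding T_def by auto
  then show "0 < t \<and> (1/t) *\<^sub>R w \<in> S" by simp
next
  assume h: "0 < t \<and> (1/t) *\<^sub>R w \<in> S"
  then have "w = t *\<^sub>R ((1/t) *\<^sub>R w)" by simp
  with h show "t \<in> T w" unfolding T_def by blast
qed

lemma zeroS: "0 \<in> S" using eball epos by auto

lemma T_bdd: "bdd_below (T w)"
  by (rule bdd_belowI[of _ 0]) (auto simp: mem_T)

lemma T_big: assumes "norm w / \<epsilon> < t" shows "t \<in> T w"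
proof -
  have tpos: "0 < t" using assms epos by (smt (verit) divide_nonneg_pos norm_ge_zero)
  have "norm ((1/t) *\<^sub>R w) = norm w / t" using tpos by simp
  also have "\<dots> \<le> \<epsilon>" using assms tpos epos by (simp add: divide_le_eq mult.commute pos_divide_less_eq)
  finally have "(1/t) *\<^sub>R w \<in> S" using eball by auto
  with tpos show ?thesis by (simp add: mem_T)
qed

lemma T_ne: "T w \<noteq> {}" using T_big[of w "norm w / \<epsilon> + 1"] by auto

lemma g_le: "t \<in> T w \<Longrightarrow> g w \<le> t"
  unfolding g_def' by (rule cInf_lower[OF _ T_bdd])

lemma g_ge: "(\<And>t. t \<in> T w \<Longrightarrow> c \<le> t) \<Longrightarrow> c \<le> g w"
  unfolding g_def' by (rule cInf_greatest[OF T_ne])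

lemma g_nonneg: "0 \<le> g w" by (rule g_ge) (auto simp: mem_T)

lemma g_upper: "g w \<le> norm w / \<epsilon>"
proof (rule field_le_epsilon)
  fix e :: real assume "0 < e"
  then show "g w \<le> norm w / \<epsilon> + e" by (intro g_le T_big) simp
qed

lemma g_lower: "norm w \<le> R * g w"
proof -
  have "norm w / R \<le> g w"
  proof (rule g_ge)
    fix t assume "t \<in> T w"
    then have t: "0 < t" "(1/t) *\<^sub>R w \<in> S" by (auto simp: mem_T)
    then have "norm ((1/t) *\<^sub>R w) \<le> R" using Rb by blast
    then have "norm w / t \<le> R" using t by simp
    then show "norm w / R \<le> t" using t Rpos by (simp add: divide_le_eq mult.commute)
  qed
  then show ?thesis using Rpos by (simp add: divide_le_eq mult.commute)
qed

lemma starS: "s \<in> S \<Longrightarrow> 0 \<le> c \<Longrightarrow> c \<le> 1 \<Longrightarrow> c *\<^sub>R s \<in> S"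
  using convexD[OF cvx, of s 0 c "1 - c"] zeroS by auto

lemma T_up: assumes "t \<in> T w" "t \<le> t'" shows "t' \<in> T w"
proof -
  have t: "0 < t" "(1/t) *\<^sub>R w \<in> S" using assms by (auto simp: mem_T)
  have tp: "0 < t'" using t assms by simp
  have "(t/t') *\<^sub>R ((1/t) *\<^sub>R w) \<in> S" by (rule starS[OF t(2)]) (use t tp assms in auto)
  moreover have "(t/t') *\<^sub>R ((1/t) *\<^sub>R w) = (1/t') *\<^sub>R w" using t by simp
  ultimately have "(1/t') *\<^sub>R w \<in> S" by metis
  then show ?thesis using tp by (simp add: mem_T)
qed

lemma g_lt: assumes "g w < t" shows "t \<in> T w"
proof -
  obtain t' where "t' \<in> T w" "t' < t" using cInf_lessD[OF T_ne, of w t] assms g_def' by auto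
  then show ?thesis using T_up by auto
qed

lemma g_le1: assumes "g w \<le> 1" shows "w \<in> S"
proof -
  have cl: "closed S" using cpt compact_imp_closed by blast
  have "\<forall>e>0. \<exists>y\<in>S. dist y w < e"
  proof (intro allI impI)
    fix e :: real assume e: "0 < e"
    define t where "t = 1 + e / (norm w + 1)"
    have t1: "1 < t" using e unfolding t_def by (smt (verit) divide_pos_pos norm_ge_zero)
    then have "t \<in> T w" using assms by (intro g_lt) simp
    then have yS: "(1/t) *\<^sub>R w \<in> S" by (simp add: mem_T)
    have "dist ((1/t) *\<^sub>R w) w = norm ((1/t) *\<^sub>R w - w)" by (simp add: dist_norm)
    also have "(1/t) *\<^sub>R w - w = ((1 - t)/t) *\<^sub>R w" using t1 by (simp add: algebra_simps diff_divide_distrib)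
    also have "norm \<dots> = ((t - 1)/t) * norm w" using t1 by simp
    also have "\<dots> \<le> (t - 1) * norm w" using t1 by (intro mult_right_mono) (auto simp: divide_le_eq)
    also have "\<dots> = e * (norm w / (norm w + 1))" by (simp add: t_def)
    also have "\<dots> < e" using e by (rule frac_lt) simp
    finally show "\<exists>y\<in>S. dist y w < e" using yS by blast
  qed
  then show ?thesis using closed_approachable[OF cl] by blast
qed

lemma g_S: "s \<in> S \<Longrightarrow> g s \<le> 1" by (rule g_le) (simp add: mem_T)

lemma g_homog: assumes "0 < c" shows "g (c *\<^sub>R w) = c * g w"
proof -
  have A: "g (c *\<^sub>R w) \<le> c * g w" if c: "0 < c" for c w
  proof (rule field_le_epsilon)
    fix e :: real assume e: "0 < e"
    have "g w + e / c \<in> T w" using e c by (intro g_lt) simp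
    then have "0 < g w + e / c" "(1/(g w + e / c)) *\<^sub>R w \<in> S" by (auto simp: mem_T)
    moreover have "(1/(c * (g w + e/c))) *\<^sub>R (c *\<^sub>R w) = (1/(g w + e / c)) *\<^sub>R w" using c by simp
    ultimately have "c * (g w + e/c) \<in> T (c *\<^sub>R w)" using c by (simp add: mem_T)
    then have "g (c *\<^sub>R w) \<le> c * (g w + e/c)" by (rule g_le)
    also have "\<dots> = c * g w + e" using c by (simp add: algebra_simps)
    finally show "g (c *\<^sub>R w) \<le> c * g w + e" .
  qed
  have "g w = g ((1/c) *\<^sub>R (c *\<^sub>R w))" using assms by simp
  also have "\<dots> \<le> (1/c) * g (c *\<^sub>R w)" using A[of "1/c" "c *\<^sub>R w"] assms by simp
  finally have "g w \<le> g (c *\<^sub>R w) / c" by simp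
  then have "c * g w \<le> g (c *\<^sub>R w)" using assms by (simp add: le_divide_eq mult.commute)
  with A[OF assms, of w] show ?thesis by linarith
qed

lemma g_neg: "g (- w) = g w"
proof -
  have "T (- w) = T w"
  proof -
    have "(1/t) *\<^sub>R (- w) \<in> S \<longleftrightarrow> (1/t) *\<^sub>R w \<in> S" for t
      using sym by (metis minus_minus scaleR_minus_right)
    then show ?thesis by (auto simp: mem_T)
  qed
  then show ?thesis by (simp add: g_def')
qed

lemma g_zero: "g 0 = 0" using g_upper[of 0] g_nonneg[of 0] by simp

lemma g_scale: "g (c *\<^sub>R w) = \<bar>c\<bar> * g w"
proof (cases "c = 0")
  case True then show ?thesis by (simp add: g_zero)
next
  case False
  show ?thesis
  proof (cases "c > 0")
    case True then show ?thesis by (simp add: g_homog)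
  next
    case False
    with \<open>c \<noteq> 0\<close> have "0 < - c" by simp
    then have "g ((- c) *\<^sub>R w) = (- c) * g w" by (rule g_homog)
    then show ?thesis using False \<open>c \<noteq> 0\<close> g_neg
      by (metis abs_of_neg linorder_neqE_linordered_idom scaleR_minus_left)
  qed
qed

lemma g_triangle: "g (v + w) \<le> g v + g w"
proof (rule field_le_epsilon)
  fix e :: real assume e: "0 < e"
  define t1 where "t1 = g v + e/2"
  define t2 where "t2 = g w + e/2"
  have "t1 \<in> T v" "t2 \<in> T w" using e by (auto simp: t1_def t2_def intro!: g_lt)
  then have h: "0 < t1" "(1/t1) *\<^sub>R v \<in> S" "0 < t2" "(1/t2) *\<^sub>R w \<in> S" by (auto simp: mem_T)
  have "(t1/(t1+t2)) *\<^sub>R ((1/t1) *\<^sub>R v) + (t2/(t1+t2)) *\<^sub>R ((1/t2) *\<^sub>R w) \<in> S"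
    using h by (intro convexD[OF cvx]) (auto simp: add_divide_distrib[symmetric])
  moreover have "(t1/(t1+t2)) *\<^sub>R ((1/t1) *\<^sub>R v) + (t2/(t1+t2)) *\<^sub>R ((1/t2) *\<^sub>R w)
      = (1/(t1+t2)) *\<^sub>R (v + w)" using h by (simp add: scaleR_add_right)
  ultimately have "t1 + t2 \<in> T (v + w)" using h by (simp add: mem_T)
  then have "g (v + w) \<le> t1 + t2" by (rule g_le)
  then show "g (v + w) \<le> g v + g w + e" by (simp add: t1_def t2_def)
qed

lemma g_diff_tri: "g (a - c) \<le> g (a - b) + g (b - c)"
  using g_triangle[of "a - b" "b - c"] by simp

lemma g_rev: "g a - g b \<le> g (a - b)"
  using g_triangle[of "a - b" b] by simp

lemma g_commute: "g (a - b) = g (b - a)"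
  using g_neg[of "a - b"] by simp

lemma g_proj: assumes "0 < g w1" "0 < g w2"
  shows "g ((1/g w1) *\<^sub>R w1 - (1/g w2) *\<^sub>R w2) \<le> 2 * g (w1 - w2) / g w2"
proof -
  have eq: "(1/g w1) *\<^sub>R w1 - (1/g w2) *\<^sub>R w2 = (1/g w2) *\<^sub>R (w1 - w2) + (1/g w1 - 1/g w2) *\<^sub>R w1"
    by (simp add: algebra_simps)
  have "g ((1/g w1 - 1/g w2) *\<^sub>R w1) = \<bar>1/g w1 - 1/g w2\<bar> * g w1" by (rule g_scale)
  also have "\<dots> = \<bar>g w2 - g w1\<bar> / g w2" using assms by (simp add: field_simps abs_div)
  also have "\<dots> \<le> g (w1 - w2) / g w2"
    using assms g_rev[of w2 w1] g_rev[of w1 w2] g_commute[of w1 w2]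
    by (intro divide_right_mono) auto
  finally have B: "g ((1/g w1 - 1/g w2) *\<^sub>R w1) \<le> g (w1 - w2) / g w2" .
  have "g ((1/g w2) *\<^sub>R (w1 - w2)) = g (w1 - w2) / g w2" using assms by (simp add: g_scale)
  then show ?thesis unfolding eq using g_triangle[of "(1/g w2) *\<^sub>R (w1 - w2)" "(1/g w1 - 1/g w2) *\<^sub>R w1"] B
    by simp
qed

lemma g_frontier: assumes "g u = 1" shows "u \<in> frontier S"
proof -
  have uS: "u \<in> S" using assms g_le1 by simp
  have "u \<notin> interior S"
  proof
    assume "u \<in> interior S"
    then obtain e where e: "0 < e" "cball u e \<subseteq> S" using mem_interior_cball by blast
    define c where "c = 1 + e / (norm u + 1)"
    have c1: "1 < c" using e unfolding c_def by (smt (verit) divide_pos_pos norm_ge_zero)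
    have "dist u (c *\<^sub>R u) = norm ((c - 1) *\<^sub>R u)" by (simp add: dist_norm algebra_simps norm_minus_commute)
    also have "\<dots> = e * (norm u / (norm u + 1))" using c1 e by (simp add: c_def)
    also have "\<dots> \<le> e" using frac_lt[OF e(1), of "norm u"] by simp
    finally have "c *\<^sub>R u \<in> S" using e by auto
    then have "g (c *\<^sub>R u) \<le> 1" by (rule g_S)
    then show False using g_homog[of c u] c1 assms by simp
  qed
  then show ?thesis using uS cpt compact_imp_closed frontier_def closure_closed by (metis DiffI)
qed

lemma g_functional: assumes h: "0 < h" and hS: "\<forall>s\<in>S. s \<bullet> e \<le> h"
  shows "(w \<bullet> e) / h \<le> g w"
proof (rule g_ge)
  fix t assume "t \<in> T w"
  then have t: "0 < t" "(1/t) *\<^sub>R w \<in> S" by (auto simp: mem_T)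
  then have "((1/t) *\<^sub>R w) \<bullet> e \<le> h" using hS by blast
  then have "(w \<bullet> e) / t \<le> h" by simp
  then have "w \<bullet> e \<le> h * t" using t by (simp add: divide_le_eq mult.commute)
  then show "(w \<bullet> e) / h \<le> t" using h by (simp add: divide_le_eq mult.commute)
qed

end

lemma lattice_round: "\<exists>q \<in> int_lattice. norm (p - q) \<le> real CARD('d)"
  for p :: "real^'d"
proof -
  define q :: "real^'d" where "q = (\<chi> i. of_int \<lfloor>p $ i\<rfloor>)"
  have "q \<in> int_lattice" by (simp add: int_lattice_def q_def)
  moreover have "norm (p - q) \<le> (\<Sum>i\<in>UNIV. \<bar>(p - q) $ i\<bar>)" by (rule norm_le_l1_cart)
  moreover have "(\<Sum>i\<in>UNIV. \<bar>(p - q) $ i\<bar>) \<le> (\<Sum>i\<in>(UNIV::'d set). 1)"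
    by (intro sum_mono) (simp add: q_def, linarith)
  ultimately show ?thesis using order_trans by fastforce
qed


context gS begin

lemma mem_rball0: "y \<in> rball S 0 \<rho> \<longleftrightarrow> g y \<le> \<rho>"
  by (simp add: rball_def rdist_def g_neg)

lemma mem_sector: "y \<in> sector S z \<rho> \<longleftrightarrow> y \<noteq> 0 \<and> g ((1 / g y) *\<^sub>R y - z) < \<rho>"
  by (simp add: sector_def rdist_def rproj_def)

lemma rsetdist_eq: "rsetdist S x A = Inf ((\<lambda>y. g (x - y)) ` A)"
  by (simp add: rsetdist_def rdist_def)

lemma rsetdist_le: "y \<in> A \<Longrightarrow> rsetdist S x A \<le> g (x - y)"
  unfolding rsetdist_eq
  by (rule cInf_lower) (auto intro!: bdd_belowI[of _ 0] simp: g_nonneg)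

lemma rsetdist_ge: "A \<noteq> {} \<Longrightarrow> (\<And>y. y \<in> A \<Longrightarrow> c \<le> g (x - y)) \<Longrightarrow> c \<le> rsetdist S x A"
  unfolding rsetdist_eq by (rule cInf_greatest) auto

end

lemma asym1: fixes b K q D :: real
  assumes "b < 1" "1/2<b" "0 < K" "0<q" "0\<le>D"
  shows "\<forall>\<^sub>F m in at_top. (1+D)* m powr b + 2*K + 1 < q*m"
  using assms by real_asymp

lemma asym2: fixes b K a :: real
  assumes "b < 1" "1/2<b" "0 < K" "a<1" "(b+1)/2 < a"
  shows "\<forall>\<^sub>F m in at_top. 2*K/(m - m powr b - K) < m powr (a-1)"
  using assms by real_asymp

lemma asym3: fixes b K a C D :: real
  assumes "b < 1" "1/2<b" "0 < K" "a<1" "(b+1)/2 < a" "0<C" "0\<le>D"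
  shows "\<forall>\<^sub>F m in at_top. (2+D) * m powr b + 2*K + 1 < m * C * (m powr (a-1))^2"
  using assms by real_asymp

lemma asym:
  fixes \<delta> \<beta> \<alpha> K C :: real
  assumes "0 < \<delta>" "1/2 < \<beta>" "\<beta> < 1" "\<alpha> < 1" "(\<beta> + 1) / 2 < \<alpha>" "0 < K" "0 < C"
  shows "\<forall>\<^sub>F n in sequentially. 1 \<le> real n \<and>
     (1 + 4 * \<delta> powr \<beta>) * real n powr \<beta> + 2*K + 1 < (\<delta>/(1+\<delta>)) * real n \<and>
     2*K/(real n - real n powr \<beta> - K) < real n powr (\<alpha>-1) \<and>
     (2 + 4 * \<delta> powr \<beta>) * real n powr \<beta> + 2*K + 1 < real n * C * (real n powr (\<alpha>-1))^2"
proof -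
  have q: "0 < \<delta>/(1+\<delta>)" using assms(1) by simp
  have D: "0 \<le> 4 * \<delta> powr \<beta>" by simp
  have "\<forall>\<^sub>F m in at_top. 1 \<le> m \<and>
     (1 + 4 * \<delta> powr \<beta>) * m powr \<beta> + 2*K + 1 < (\<delta>/(1+\<delta>)) * m \<and>
     2*K/(m - m powr \<beta> - K) < m powr (\<alpha>-1) \<and>
     (2 + 4 * \<delta> powr \<beta>) * m powr \<beta> + 2*K + 1 < m * C * (m powr (\<alpha>-1))^2"
    by (rule eventually_conj[OF eventually_ge_at_top[of "1::real"]
      eventually_conj[OF asym1[OF assms(3,2,6) q D]
      eventually_conj[OF asym2[OF assms(3,2,6,4,5)] asym3[OF assms(3,2,6,4,5,7) D]]]])
  then show ?thesis using filterlim_real_sequentially filterlim_iff by blast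
qed

theorem claim1:
  fixes S :: "(real^'d) set" and z :: "real^'d" and r \<delta> \<beta> \<alpha> :: real
  assumes "compact S" and "convex S" and "0 \<in> interior S"
    and "\<forall>x\<in>S. - x \<in> S"
    and "uniformly_curved S"
    and "z \<in> frontier S" and "0 < r"
    and "0 < \<delta>" and "\<delta> < 1"
    and "1/2 < \<beta>" and "\<beta> < 1"
    and "1/2 < \<alpha>" and "\<alpha> < 1" and "(\<beta> + 1) / 2 < \<alpha>"
  shows "\<forall>\<^sub>F n in sequentially.
           \<forall>x \<in> R1 S z r \<delta> \<beta> n.
             rsetdist S x (R0 S z r \<delta> \<beta> \<alpha> n) + 4 * (\<delta> * real n) powr \<beta>
               < rsetdist S x (B0 S z r \<delta> \<beta> \<alpha> n)"
proof -
  obtain \<epsilon> where \<epsilon>: "0 < \<epsilon>" "cball 0 \<epsilon> \<subseteq> S" using assms(3) mem_interior_cball by blast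
  obtain R where R: "0 < R" "\<forall>x\<in>S. norm x \<le> R"
    using compact_imp_bounded[OF assms(1)] bounded_pos by blast
  interpret gS S \<epsilon> R using assms(1,2,4) \<epsilon> R by unfold_locales auto
  obtain \<rho> where \<rho>: "\<forall>w\<in>frontier S. \<exists>c. S \<subseteq> cball c \<rho> \<and> w \<in> sphere c \<rho>"
    using assms(5) uniformly_curved_def by blast
  have \<rho>pos: "0 < \<rho>"
  proof -
    obtain c where c: "S \<subseteq> cball c \<rho>" "z \<in> sphere c \<rho>" using \<rho> assms(6) by blast
    have "0 \<le> \<rho>" using c(2) by (metis mem_sphere zero_le_dist)
    moreover have "\<rho> \<noteq> 0"
    proof
      assume "\<rho> = 0"
      then have Sc: "S \<subseteq> {c}" using c(1) by auto
      obtain v :: "real^'d" where v: "norm v = \<epsilon>" using vector_choose_size \<epsilon>(1) by (meson less_le)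
      have "v \<in> S" using v \<epsilon> by auto
      moreover have "0 \<in> S" by (rule zeroS)
      ultimately have "v = 0" using Sc by auto
      then show False using v \<epsilon>(1) by simp
    qed
    ultimately show ?thesis by simp
  qed
  define K where "K = real CARD('d) / \<epsilon>"
  define C where "C = \<epsilon>^2 / (2 * (1 + \<delta>) * R * \<rho>)"
  have Kpos: "0 < K" using \<epsilon>(1) by (simp add: K_def)
  have Cpos: "0 < C" using \<epsilon>(1) R(1) \<rho>pos assms(8) by (simp add: C_def)
  note ev = asym[OF assms(8,10,11,13,14) Kpos Cpos]
  show ?thesis
  proof (rule eventually_mono[OF ev], intro ballI)
    fix n :: nat and x
    assume H: "1 \<le> real n \<and>
     (1 + 4 * \<delta> powr \<beta>) * real n powr \<beta> + 2*K + 1 < (\<delta>/(1+\<delta>)) * real n \<and>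
     2*K/(real n - real n powr \<beta> - K) < real n powr (\<alpha>-1) \<and>
     (2 + 4 * \<delta> powr \<beta>) * real n powr \<beta> + 2*K + 1 < real n * C * (real n powr (\<alpha>-1))^2"
    assume x: "x \<in> R1 S z r \<delta> \<beta> n"
    have n1: "1 \<le> real n" using H by blast
    have H2: "(1 + 4 * \<delta> powr \<beta>) * real n powr \<beta> + 2*K + 1 < (\<delta>/(1+\<delta>)) * real n" using H by blast
    have H3: "2*K/(real n - real n powr \<beta> - K) < real n powr (\<alpha>-1)" using H by blast
    have H4: "(2 + 4 * \<delta> powr \<beta>) * real n powr \<beta> + 2*K + 1 < real n * C * (real n powr (\<alpha>-1))^2"
      using H by blast
    have dpow: "(\<delta> * real n) powr \<beta> = \<delta> powr \<beta> * real n powr \<beta>"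
      using assms(8) by (simp add: powr_mult)
    have npb: "0 \<le> real n powr \<beta>" by simp
    have dpb: "0 \<le> \<delta> powr \<beta>" by simp
    have qeq: "(\<delta>/(1+\<delta>)) * real n = real n - real n / (1 + \<delta>)"
      using assms(8) by (simp add: field_simps)
    have nd0: "0 \<le> real n / (1 + \<delta>)" using assms(8) by simp
    define a where "a = g x"
    have xa: "real n < a" "g ((1 / a) *\<^sub>R x - z) < r" "x \<in> int_lattice"
      using x by (auto simp: R1_def rannulus_def mem_rball0 mem_sector a_def)
    have apos: "0 < a" using xa n1 by simp
    define u where "u = (1 / a) *\<^sub>R x"
    have gu: "g u = 1" using apos g_homog[of "1/a" x] by (simp add: u_def a_def)
    have guz: "g (u - z) < r" using xa by (simp add: u_def)
    have xu: "x = a *\<^sub>R u" using apos by (simp add: u_def)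
    define L where "L = a - real n + real n powr \<beta> + 2 * K"
    define t where "t = real n - real n powr \<beta> - K"
    have nbb: "real n powr \<beta> \<le> (1 + 4 * \<delta> powr \<beta>) * real n powr \<beta>"
      using mult_nonneg_nonneg[OF dpb npb] by (simp add: distrib_right)
    have tbig: "K + real n / (1 + \<delta>) < t"
      unfolding t_def using H2 qeq nbb by linarith
    have tpos: "0 < t" using tbig Kpos nd0 by linarith
    define p where "p = t *\<^sub>R u"
    have gp: "g p = t" using g_homog[OF tpos, of u] gu by (simp add: p_def)
    have up: "u = (1 / g p) *\<^sub>R p" using tpos gp by (simp add: p_def)
    obtain y where y: "y \<in> int_lattice" "norm (p - y) \<le> real CARD('d)"
      using lattice_round by blast
    have gpy: "g (p - y) \<le> K"
      using g_upper[of "p - y"] y(2) \<epsilon>(1) unfolding K_def by (smt (verit) divide_right_mono)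
    have gyp: "g (y - p) \<le> K" using gpy g_commute by simp
    have gy_up: "g y \<le> real n - real n powr \<beta>" using g_rev[of y p] gyp gp t_def by simp
    have gy_lo: "real n / (1 + \<delta>) < g y" using g_rev[of p y] gpy gp tbig by simp
    have gypos: "0 < g y" using gy_lo nd0 by linarith
    have y0: "y \<noteq> 0" using gypos g_zero by auto
    have "g ((1 / g y) *\<^sub>R y - u) \<le> 2 * g (y - p) / g p"
      unfolding up using g_proj[of y p] gypos gp tpos by simp
    also have "\<dots> \<le> 2 * K / t" using gyp gp tpos by (simp add: divide_right_mono)
    also have "\<dots> < real n powr (\<alpha>-1)" using H3 by (simp add: t_def)
    finally have gyu: "g ((1 / g y) *\<^sub>R y - u) < real n powr (\<alpha>-1)" .
    have "g ((1 / g y) *\<^sub>R y - z) < r + real n powr (\<alpha>-1)"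
      using g_diff_tri[of "(1 / g y) *\<^sub>R y" z u] gyu guz by simp
    then have yR0: "y \<in> R0 S z r \<delta> \<beta> \<alpha> n"
      using y(1) gy_up gy_lo y0 by (auto simp: R0_def rannulus_def mem_rball0 mem_sector)
    have "g (x - y) \<le> g (x - p) + g (p - y)" by (rule g_diff_tri)
    also have "g (x - p) = a - t"
    proof -
      have "x - p = (a - t) *\<^sub>R u" by (simp add: xu p_def algebra_simps)
      then show ?thesis using g_scale[of "a - t" u] gu xa(1) t_def npb Kpos by simp
    qed
    finally have "g (x - y) \<le> L" using gpy by (simp add: L_def t_def)
    then have A: "rsetdist S x (R0 S z r \<delta> \<beta> \<alpha> n) \<le> L"
      using rsetdist_le[OF yR0, of x] by simp
    have B0ne: "B0 S z r \<delta> \<beta> \<alpha> n \<noteq> {}"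
    proof -
      have "0 \<in> B0 S z r \<delta> \<beta> \<alpha> n" using nd0
        by (auto simp: B0_def mem_rball0 g_zero int_lattice_def)
      then show ?thesis by blast
    qed
    have B: "L + 4 * (\<delta> * real n) powr \<beta> + 1 \<le> rsetdist S x (B0 S z r \<delta> \<beta> \<alpha> n)"
    proof (rule rsetdist_ge[OF B0ne])
      fix y assume yB: "y \<in> B0 S z r \<delta> \<beta> \<alpha> n"
      then have cases: "g y \<le> real n / (1 + \<delta>) \<or>
        (g y \<le> real n + real n powr \<beta> \<and> \<not> g y \<le> real n / (1 + \<delta>) \<and> y \<notin> sector S z (r + real n powr (\<alpha> - 1)))"
        by (auto simp: B0_def rannulus_def mem_rball0)
      show "L + 4 * (\<delta> * real n) powr \<beta> + 1 \<le> g (x - y)"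
      proof (cases "g y \<le> real n / (1 + \<delta>)")
        case True
        have "a - real n / (1 + \<delta>) \<le> g (x - y)" using g_rev[of x y] True a_def by simp
        moreover have "L + 4 * (\<delta> * real n) powr \<beta> + 1 \<le> a - real n / (1 + \<delta>)"
          using H2 qeq dpow unfolding L_def by (simp add: algebra_simps)
        ultimately show ?thesis by linarith
      next
        case False
        then have yb: "g y \<le> real n + real n powr \<beta>" "real n / (1 + \<delta>) < g y"
          "y \<notin> sector S z (r + real n powr (\<alpha> - 1))" using cases by auto
        define b where "b = g y"
        have bpos: "0 < b" using yb nd0 b_def by linarith
        have y0: "y \<noteq> 0" using bpos g_zero b_def by auto
        define v where "v = (1 / b) *\<^sub>R y"
        have gvz: "r + real n powr (\<alpha> - 1) \<le> g (v - z)"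
          using yb(3) y0 by (simp add: mem_sector v_def b_def)
        have gv: "g v = 1" using bpos g_homog[of "1/b" y] by (simp add: v_def b_def)
        have yv: "y = b *\<^sub>R v" using bpos by (simp add: v_def)
        have vS: "v \<in> S" using gv g_le1 by simp
        have gvu: "real n powr (\<alpha> - 1) < g (v - u)"
          using g_diff_tri[of v z u] gvz guz g_commute[of u z] by simp
        have nvu: "\<epsilon> * real n powr (\<alpha> - 1) \<le> norm (v - u)"
        proof -
          have "\<epsilon> * g (v - u) \<le> norm (v - u)"
            using g_upper[of "v - u"] \<epsilon>(1) by (simp add: le_divide_eq mult.commute)
          moreover have "\<epsilon> * real n powr (\<alpha> - 1) \<le> \<epsilon> * g (v - u)"
            using gvu \<epsilon>(1) by (intro mult_left_mono) auto
          ultimately show ?thesis by linarith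
        qed
        define N where "N = (norm (v - u))^2"
        have N: "\<epsilon>^2 * (real n powr (\<alpha> - 1))^2 \<le> N"
          unfolding N_def using power_mono[OF nvu, of 2] \<epsilon>(1) by (simp add: power_mult_distrib)
        have uF: "u \<in> frontier S" using gu by (rule g_frontier)
        obtain c0 where c0: "S \<subseteq> cball c0 \<rho>" "u \<in> sphere c0 \<rho>" using \<rho> uF by blast
        define e where "e = u - c0"
        have ne: "norm e = \<rho>" using c0(2) by (simp add: e_def dist_norm norm_minus_commute)
        have key: "(w - u) \<bullet> e \<le> - ((norm (w - u))^2 / 2)" if wS: "w \<in> S" for w
        proof -
          have "norm ((w - u) + e) \<le> \<rho>" using c0(1) wS
            by (auto simp: e_def dist_norm norm_minus_commute)
          then have n1: "norm ((w - u) + e) \<le> norm e" using ne by simp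
          have sq: "(norm ((w - u) + e))^2 \<le> (norm e)^2" by (rule power_mono[OF n1 norm_ge_zero])
          have dn: "(w - u) \<bullet> e = ((norm ((w - u) + e))^2 - (norm (w - u))^2 - (norm e)^2) / 2"
            by (rule dot_norm)
          show ?thesis unfolding dn using sq by (simp add: field_simps)
        qed
        define h where "h = u \<bullet> e"
        have hpos: "0 < h"
        proof -
          define w0 where "w0 = (\<epsilon> / \<rho>) *\<^sub>R e"
          have "norm w0 = \<epsilon>" using ne \<rho>pos \<epsilon>(1) by (simp add: w0_def)
          then have "w0 \<in> S" using \<epsilon>(2) by auto
          then have "(w0 - u) \<bullet> e \<le> 0" using key[of w0] by (smt (verit) zero_le_power2 divide_nonneg_pos)
          moreover have "w0 \<bullet> e = \<epsilon> * \<rho>" using ne \<rho>pos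
            by (simp add: w0_def power2_norm_eq_inner[symmetric] power2_eq_square)
          ultimately show ?thesis using \<epsilon>(1) \<rho>pos by (simp add: h_def inner_diff_left)
              (smt (verit) mult_pos_pos)
        qed
        have hle: "h \<le> R * \<rho>"
        proof -
          have "h \<le> norm u * norm e" unfolding h_def by (rule norm_cauchy_schwarz)
          also have "\<dots> \<le> R * \<rho>" using R(2) gu g_le1 ne \<rho>pos by (simp add: mult_right_mono)
          finally show ?thesis .
        qed
        have hS: "\<forall>s\<in>S. s \<bullet> e \<le> h"
        proof
          fix s assume "s \<in> S"
          then have "(s - u) \<bullet> e \<le> - ((norm (s - u))^2 / 2)" by (rule key)
          moreover have "- ((norm (s - u))^2 / 2) \<le> 0" by simp
          ultimately have "(s - u) \<bullet> e \<le> 0" by (rule order_trans)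
          then show "s \<bullet> e \<le> h" by (simp add: h_def inner_diff_left)
        qed
        have func: "((x - y) \<bullet> e) / h \<le> g (x - y)" by (rule g_functional[OF hpos hS])
        have ve: "v \<bullet> e \<le> h - N / 2" using key[OF vS] by (simp add: N_def h_def inner_diff_left)
        have "(x - y) \<bullet> e = a * h - b * (v \<bullet> e)" by (simp add: xu yv h_def inner_diff_left)
        also have "\<dots> \<ge> a * h - b * (h - N / 2)" using ve bpos by (simp add: mult_left_mono)
        finally have "a * h - b * (h - N / 2) \<le> (x - y) \<bullet> e" .
        then have "(a * h - b * (h - N / 2)) / h \<le> ((x - y) \<bullet> e) / h"
          using hpos by (simp add: divide_right_mono)
        moreover have "(a * h - b * (h - N / 2)) / h = a - b + b * N / (2 * h)"
          using hpos by (simp add: field_simps)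
        ultimately have G1: "a - b + b * N / (2 * h) \<le> g (x - y)" using func by linarith
        have "real n * C * (real n powr (\<alpha>-1))^2
            = ((real n / (1 + \<delta>)) * (\<epsilon>^2 * (real n powr (\<alpha> - 1))^2)) / (2 * (R * \<rho>))"
          using assms(8) R(1) \<rho>pos by (simp add: C_def field_simps)
        also have "\<dots> \<le> (b * N) / (2 * (R * \<rho>))"
          using yb(2) N nd0 R(1) \<rho>pos b_def
          by (intro divide_right_mono mult_mono) auto
        also have "\<dots> \<le> (b * N) / (2 * h)"
          using hpos hle bpos N_def R(1) \<rho>pos by (intro divide_left_mono) auto
        finally have G2: "real n * C * (real n powr (\<alpha>-1))^2 \<le> b * N / (2 * h)" .
        show ?thesis using G1 G2 H4 yb(1) dpow unfolding L_def b_def by (simp add: algebra_simps)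
      qed
    qed
    show "rsetdist S x (R0 S z r \<delta> \<beta> \<alpha> n) + 4 * (\<delta> * real n) powr \<beta>
               < rsetdist S x (B0 S z r \<delta> \<beta> \<alpha> n)" using A B by linarith
  qed
qed

end
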